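(* Let $\lambda<0$, $C>0$ and $e_0>0$ be real numbers, and define for $t\ge 0$ $$\delta(t)=\Big(e_0^2 e^{\lambda t}+\frac{C^2}{\lambda^2}\Big(t^2+\frac{2t}{\lambda}+\frac{2}{\lambda^2}\big(1-e^{\lambda t}\big)\Big)\Big)^{1/2}.$$ Let $G=\frac{\sqrt{3}\,e_0|\lambda|}{C}$ and let $\alpha=1+\frac{|\lambda|G}{4}-\sqrt{1+\big(\frac{\lambda G}{4}\big)^2}$, which is the smallest positive root of $-\frac12|\lambda|G+\big(2+\frac12|\lambda|G\big)\alpha-\alpha^2=0$. Suppose $\frac{|\lambda|G}{4}<1$. Then $0<\alpha<1$, and $\delta(t)\le e_0$ for all $t\in[0,G(1-\alpha)]$.
   Context: In the paper this is applied with $\lambda=\lambda_u$, the (negative) one-sided Lipschitz constant of a vector field $f_u$ on $S=[0,1]^M$, and $C=C_u=\sup_{y\in S}L_u\|f_u(y)\|$ where $L_u$ is the Lipschitz constant of $f_u$ on $S$; then $\delta(t)$ is the error bound $\delta^u_{t,e_0}$ between the exact solution of $dy/dt=f_u(y)$ and its explicit Euler approximation $z_0+t f_u(z_0)$ with initial error $e_0=\|y_0-z_0\|$. *)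

theory Defs
  imports Complex_Main
begin

text \<open>Error bound delta(t) between the exact solution and the explicit Euler step.\<close>
definition euler_delta :: "real \<Rightarrow> real \<Rightarrow> real \<Rightarrow> real \<Rightarrow> real" where
  "euler_delta lam C e0 t =
     sqrt (e0\<^sup>2 * exp (lam * t)
           + C\<^sup>2 / lam\<^sup>2 * (t\<^sup>2 + 2 * t / lam + 2 / lam\<^sup>2 * (1 - exp (lam * t))))"

end

theory Submission
  imports Defs
begin

lemma exp_up: assumes "(s::real) \<ge> 0" shows "exp (-s) \<le> 1 - s + s\<^sup>2/2"
proof -
  let ?f = "\<lambda>x::real. 1 - x + x\<^sup>2/2 - exp (-x)"
  have "?f 0 \<le> ?f s"
  proof (rule DERIV_nonneg_imp_increasing_open[OF assms])
    fix x :: real assume "0 < x" "x < s"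
    have "DERIV ?f x :> (-1 + x + exp (-x))"
      by (auto intro!: derivative_eq_intros simp: power2_eq_square)
    moreover have "-1 + x + exp (-x) \<ge> 0" using exp_ge_add_one_self[of "-x"] by simp
    ultimately show "\<exists>y. DERIV ?f x :> y \<and> y \<ge> 0" by blast
  next
    show "continuous_on {0..s} ?f" by (intro continuous_intros) auto
  qed
  then show ?thesis by simp
qed

lemma exp_low: assumes "(s::real) \<ge> 0" shows "exp (-s) \<ge> 1 - s + s\<^sup>2/2 - s^3/6"
proof -
  let ?f = "\<lambda>x::real. exp (-x) - 1 + x - x\<^sup>2/2 + x^3/6"
  have "?f 0 \<le> ?f s"
  proof (rule DERIV_nonneg_imp_increasing_open[OF assms])
    fix x :: real assume "0 < x" "x < s"
    have "DERIV ?f x :> (- exp (-x) + 1 - x + x\<^sup>2/2)"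
      by (auto intro!: derivative_eq_intros simp: power2_eq_square)
    moreover have "- exp (-x) + 1 - x + x\<^sup>2/2 \<ge> 0" using exp_up[of x] \<open>0<x\<close> by simp
    ultimately show "\<exists>y. DERIV ?f x :> y \<and> y \<ge> 0" by blast
  next
    show "continuous_on {0..s} ?f" by (intro continuous_intros) auto
  qed
  then show ?thesis by simp
qed

theorem lemma1:
  fixes lam C e0 G \<alpha> :: real
  assumes "lam < 0" and "C > 0" and "e0 > 0"
    and "G = sqrt 3 * e0 * \<bar>lam\<bar> / C"
    and "\<alpha> = 1 + \<bar>lam\<bar> * G / 4 - sqrt (1 + (lam * G / 4)\<^sup>2)"
    and "\<bar>lam\<bar> * G / 4 < 1"
  shows "0 < \<alpha> \<and> \<alpha> < 1 \<and>
         (\<forall>t \<in> {0 .. G * (1 - \<alpha>)}. euler_delta lam C e0 t \<le> e0)"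
proof -
  define mu where "mu = - lam"
  have mu: "mu > 0" using assms(1) mu_def by simp
  have lamabs: "\<bar>lam\<bar> = mu" using assms(1) mu_def by simp
  have Gp: "G > 0" using assms(2,3,4) mu lamabs by simp
  define a where "a = mu * G / 4"
  have ap: "a > 0" unfolding a_def using mu Gp by simp
  define R where "R = sqrt (1 + a\<^sup>2)"
  have R2: "R\<^sup>2 = 1 + a\<^sup>2" unfolding R_def by simp
  have Rp: "R \<ge> 0" unfolding R_def by simp
  have sq: "(lam * G / 4)\<^sup>2 = a\<^sup>2" unfolding a_def mu_def by (simp add: power2_eq_square)
  have al: "\<alpha> = 1 + a - R" using assms(5) lamabs sq unfolding R_def a_def by simp
  have aR: "a < R"
  proof -
    have "sqrt (a\<^sup>2) < sqrt (1 + a\<^sup>2)" by (subst real_sqrt_less_iff) simp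
    thus ?thesis unfolding R_def using ap by simp
  qed
  have R1: "R < 1 + a"
  proof -
    have "1 + a\<^sup>2 < (1+a)\<^sup>2" using ap by (simp add: power2_eq_square algebra_simps)
    hence "sqrt (1 + a\<^sup>2) < sqrt ((1+a)\<^sup>2)" by (simp only: real_sqrt_less_iff)
    thus ?thesis unfolding R_def using ap by simp
  qed
  have G2: "G\<^sup>2 * C\<^sup>2 = 3 * e0\<^sup>2 * mu\<^sup>2"
    using assms(2,4) lamabs by (simp add: power_mult_distrib power_divide)
  have main: "euler_delta lam C e0 t \<le> e0" if t: "0 \<le> t" "t \<le> G * (R - a)" for t
  proof -
    have "(t + a*G)\<^sup>2 \<le> (G*R)\<^sup>2"
      using t ap Gp by (intro power_mono) (auto simp: algebra_simps)
    moreover have "(G*R)\<^sup>2 = G\<^sup>2 + a\<^sup>2 * G\<^sup>2" using R2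
      by (simp add: power_mult_distrib algebra_simps)
    moreover have "(t + a*G)\<^sup>2 = t\<^sup>2 + 2*a*G*t + a\<^sup>2 * G\<^sup>2"
      by (simp add: power2_eq_square algebra_simps)
    ultimately have "t\<^sup>2 + 2*a*G*t \<le> G\<^sup>2" by linarith
    hence q: "t\<^sup>2 \<le> G\<^sup>2 * (1 - mu*t/2)" unfolding a_def by (simp add: power2_eq_square algebra_simps)
    hence q2: "C\<^sup>2 * t\<^sup>2 \<le> 3 * e0\<^sup>2 * mu\<^sup>2 * (1 - mu*t/2)"
    proof -
      have "C\<^sup>2 * t\<^sup>2 \<le> C\<^sup>2 * (G\<^sup>2 * (1 - mu*t/2))" using q by (simp add: mult_left_mono)
      also have "\<dots> = 3 * e0\<^sup>2 * mu\<^sup>2 * (1 - mu*t/2)" using G2 by (simp add: algebra_simps)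
      finally show ?thesis .
    qed
    define s where "s = mu * t"
    have s0: "s \<ge> 0" using t mu s_def by simp
    define u where "u = exp (lam * t)"
    have u: "u = exp (-s)" unfolding u_def s_def mu_def by simp
    have u1: "u \<le> 1 - s + s\<^sup>2/2" using exp_up[OF s0] u by simp
    have u2: "u \<ge> 1 - s + s\<^sup>2/2 - s^3/6" using exp_low[OF s0] u by simp
    have E: "e0\<^sup>2 * u + C\<^sup>2 / lam\<^sup>2 * (t\<^sup>2 + 2 * t / lam + 2 / lam\<^sup>2 * (1 - u))
        = e0\<^sup>2 * u + C\<^sup>2 / mu^4 * (s\<^sup>2 - 2*s + 2*(1-u))"
      unfolding s_def mu_def using assms(1)
      by (simp add: field_simps power2_eq_square power4_eq_xxxx)
    have h: "s\<^sup>2 - 2*s + 2*(1-u) \<le> s^3/3" using u2 by simp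
    have "C\<^sup>2 / mu^4 * (s\<^sup>2 - 2*s + 2*(1-u)) \<le> C\<^sup>2 / mu^4 * (s^3/3)"
      using h by (intro mult_left_mono) auto
    also have "\<dots> = (C\<^sup>2 * t\<^sup>2) * (t / (3*mu))" unfolding s_def using mu
      by (simp add: field_simps power2_eq_square power4_eq_xxxx power3_eq_cube)
    also have "\<dots> \<le> (3 * e0\<^sup>2 * mu\<^sup>2 * (1 - mu*t/2)) * (t / (3*mu))"
      using q2 t mu by (intro mult_right_mono) auto
    also have "\<dots> = e0\<^sup>2 * (s - s\<^sup>2/2)" unfolding s_def using mu
      by (simp add: field_simps power2_eq_square)
    also have "\<dots> \<le> e0\<^sup>2 * (1 - u)" using u1 by (intro mult_left_mono) auto
    finally have "e0\<^sup>2 * u + C\<^sup>2 / lam\<^sup>2 * (t\<^sup>2 + 2 * t / lam + 2 / lam\<^sup>2 * (1 - u)) \<le> e0\<^sup>2"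
      using E by (simp add: algebra_simps)
    hence "euler_delta lam C e0 t \<le> sqrt (e0\<^sup>2)"
      unfolding euler_delta_def u_def by (rule real_sqrt_le_mono)
    thus ?thesis using assms(3) by simp
  qed
  show ?thesis using al aR R1 ap main by auto
qed

end
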